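(* For every integer $n \geq 1$, the complete bipartite graphs $K_{2,n}$ and $K_{3,n}$ are stable, i.e., all roots of their independence polynomials lie in the closed left half-plane $\{z \in \mathbb{C} : \mathrm{Re}(z) \leq 0\}$.
   Context: For a simple graph $G$, the independence polynomial is $i(G,x)=\sum_{k=0}^{\alpha(G)} i_k(G)x^k$, where $i_k(G)$ is the number of independent sets of size $k$ in $G$ (with $i_0(G)=1$) and $\alpha(G)$ is the independence number. A graph $G$ is called stable if every root $z$ of $i(G,x)$ satisfies $\mathrm{Re}(z)\leq 0$. For the complete bipartite graph $K_{m,n}$ one has $i(K_{m,n},x)=(1+x)^n+(1+x)^m-1$. *)

theory Defs
  imports "HOL-Computational_Algebra.Polynomial" Complex_Main
begin

definition simple_graph :: "'a set \<Rightarrow> ('a \<Rightarrow> 'a \<Rightarrow> bool) \<Rightarrow> bool" where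
  "simple_graph V E \<longleftrightarrow> finite V \<and> (\<forall>x y. E x y \<longrightarrow> E y x) \<and>
     (\<forall>x. \<not> E x x) \<and> (\<forall>x y. E x y \<longrightarrow> x \<in> V \<and> y \<in> V)"

definition independent_set :: "'a set \<Rightarrow> ('a \<Rightarrow> 'a \<Rightarrow> bool) \<Rightarrow> 'a set \<Rightarrow> bool" where
  "independent_set V E S \<longleftrightarrow> S \<subseteq> V \<and> (\<forall>x\<in>S. \<forall>y\<in>S. \<not> E x y)"

definition indep_count :: "'a set \<Rightarrow> ('a \<Rightarrow> 'a \<Rightarrow> bool) \<Rightarrow> nat \<Rightarrow> nat" where
  "indep_count V E k = card {S. independent_set V E S \<and> card S = k}"

definition indep_number :: "'a set \<Rightarrow> ('a \<Rightarrow> 'a \<Rightarrow> bool) \<Rightarrow> nat" where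
  "indep_number V E = Max {card S | S. independent_set V E S}"

definition indep_poly :: "'a set \<Rightarrow> ('a \<Rightarrow> 'a \<Rightarrow> bool) \<Rightarrow> complex poly" where
  "indep_poly V E = (\<Sum>k\<le>indep_number V E. monom (of_nat (indep_count V E k)) k)"

definition stable_graph :: "'a set \<Rightarrow> ('a \<Rightarrow> 'a \<Rightarrow> bool) \<Rightarrow> bool" where
  "stable_graph V E \<longleftrightarrow> (\<forall>z. poly (indep_poly V E) z = 0 \<longrightarrow> Re z \<le> 0)"

definition Kbip_V :: "nat \<Rightarrow> nat \<Rightarrow> (nat + nat) set" where
  "Kbip_V m n = Inl ` {..<m} \<union> Inr ` {..<n}"

definition Kbip_E :: "nat \<Rightarrow> nat \<Rightarrow> (nat + nat) \<Rightarrow> (nat + nat) \<Rightarrow> bool" where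
  "Kbip_E m n x y \<longleftrightarrow> (\<exists>i j. i < m \<and> j < n \<and>
      ((x = Inl i \<and> y = Inr j) \<or> (x = Inr j \<and> y = Inl i)))"

end

theory Submission
  imports Defs
begin

lemma m2_case:
  fixes w :: complex
  assumes "Re w > 1" "n \<ge> 1"
  shows "w^n + w^2 \<noteq> 1"
proof
  assume eq: "w^n + w^2 = 1"
  define x y where "x = Re w" and "y = Im w"
  have x1: "x > 1" using assms x_def by simp
  have sq: "w^2 = Complex (x^2 - y^2) (2*x*y)"
    by (simp add: complex_eq_iff power2_eq_square x_def y_def)
  consider "n = 1" | "n = 2" | "n \<ge> 3" using assms by linarith
  then show False
  proof cases
    case 1
    then have "w + w^2 = 1" using eq by simp
    then have r: "x + (x^2 - y^2) = 1" and i: "y + 2*x*y = 0"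
      using sq by (auto simp: complex_eq_iff x_def y_def)
    from i have "y * (1 + 2*x) = 0" by (simp add: algebra_simps)
    with x1 have "y = 0" by simp
    then have "y^2 = 0" by simp
    moreover have "x^2 > 1" using x1 by (simp add: one_less_power)
    ultimately show False using r x1 by linarith
  next
    case 2
    then have "2 * w^2 = 1" using eq by simp
    then have r: "2*(x^2 - y^2) = 1" and i: "2*(2*x*y) = 0"
      using sq by (auto simp: complex_eq_iff x_def y_def)
    with x1 have "y = 0" by simp
    then have "y^2 = 0" by simp
    moreover have "x^2 > 1" using x1 by (simp add: one_less_power)
    ultimately show False using r by (simp add: algebra_simps)
  next
    case 3
    define s where "s = x^2 + y^2"
    have x2: "x^2 > 1" using x1 by (simp add: one_less_power)
    have s1: "s > 1" using x2 unfolding s_def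
      by (metis add_less_le_mono add.right_neutral zero_le_power2)
    have "w^n = 1 - w^2" using eq by (simp add: algebra_simps)
    then have h: "cmod w ^ n = cmod (1 - w^2)" by (metis norm_power)
    have "(cmod w ^ 2) ^ n = (cmod w ^ n)^2"
      by (metis power_mult mult.commute)
    also have "\<dots> = (cmod (1 - w^2))^2" using h by simp
    also have "cmod w ^ 2 = s" by (simp add: cmod_power2 s_def x_def y_def)
    also have "(cmod (1 - w^2))^2 = (1 - (x^2 - y^2))^2 + (2*x*y)^2"
      using sq by (simp add: cmod_power2)
    also have "\<dots> = s^2 - 2*(x^2 - y^2) + 1" unfolding s_def by algebra
    finally have e: "s^n = s^2 - 2*(x^2 - y^2) + 1" .
    have "s^3 \<le> s^n" using 3 s1 by (simp add: power_increasing)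
    moreover have "x^2 > 1" using x1 by (simp add: one_less_power)
    moreover have "s^3 - s^2 - 2*s + 3 > 0"
    proof (cases "s < 2")
      case True
      have "(s-1)^2*(s+1) \<ge> 0" using s1 by simp
      moreover have "(s-1)^2*(s+1) = s^3 - s^2 - s + 1"
        by (simp add: algebra_simps power2_eq_square power3_eq_cube)
      ultimately show ?thesis using True s1 by linarith
    next
      case False
      have "s^2*(s-1) \<ge> s^2*1" using False
        by (intro mult_left_mono) auto
      moreover have "s^2*(s-1) = s^3 - s^2"
        by (simp add: algebra_simps power2_eq_square power3_eq_cube)
      moreover have "2*s \<le> s*s" using False by (intro mult_right_mono) auto
      then have "s^2 > 2*s - 3" by (simp add: power2_eq_square)
      ultimately show ?thesis by linarith
    qed
    moreover have "y^2 = s - x^2" using s_def by simp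
    moreover have "s^n = s^2 - 2*x^2 + 2*y^2 + 1" using e by (simp add: algebra_simps)
    ultimately show False by linarith
  qed
qed

lemma m3_case:
  fixes w :: complex
  assumes "Re w > 1" "n \<ge> 1"
  shows "w^n + w^3 \<noteq> 1"
proof
  assume eq: "w^n + w^3 = 1"
  define x y where "x = Re w" and "y = Im w"
  have x1: "x > 1" using assms x_def by simp
  have x0: "x > 0" using x1 by simp
  have x2: "x^2 > 1" using x1 by (simp add: one_less_power)
  have x3: "x^3 > 1" using x1 by (simp add: one_less_power)
  have x4: "x^4 > 1" using x1 by (simp add: one_less_power)
  have sq: "w^2 = Complex (x^2 - y^2) (2*x*y)"
    by (simp add: complex_eq_iff power2_eq_square x_def y_def)
  have cu: "w^3 = Complex (x^3 - 3*x*y^2) (3*x^2*y - y^3)"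
    by (simp add: complex_eq_iff power2_eq_square power3_eq_cube x_def y_def algebra_simps)
  have qu: "w^4 = Complex (x^4 - 6*x^2*y^2 + y^4) (4*x^3*y - 4*x*y^3)"
  proof -
    have "w^4 = w^2 * w^2" by (simp flip: power_add)
    also have "\<dots> = Complex (x^4 - 6*x^2*y^2 + y^4) (4*x^3*y - 4*x*y^3)"
      unfolding sq by (simp add: complex_eq_iff) algebra
    finally show ?thesis .
  qed
  have cm: "cmod w > 1" using x1 x_def abs_Re_le_cmod[of w] by linarith
  consider "n = 1" | "n = 2" | "n = 3" | "n = 4" | "n \<ge> 5" using assms by linarith
  then show False
  proof cases
    case 1
    then have "w + w^3 = 1" using eq by simp
    then have r: "x + x^3 - 3*(x*y^2) = 1" and i: "y * (1 + 3*x^2 - y^2) = 0"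
      using cu by (auto simp: complex_eq_iff x_def y_def algebra_simps power2_eq_square power3_eq_cube)
    then consider "y = 0" | "y^2 = 1 + 3*x^2" by auto
    then show False
    proof cases
      case 1
      then show False using r x3 x0 by simp
    next
      case 2
      then have "x*y^2 = x + 3*x^3" by (simp add: algebra_simps power2_eq_square power3_eq_cube)
      then show False using r x3 x0 by linarith
    qed
  next
    case 2
    then have "w^2 + w^3 = 1" using eq by simp
    then have r: "x^2 - y^2 + x^3 - 3*(x*y^2) = 1" and i: "y * (2*x + 3*x^2 - y^2) = 0"
      using cu sq by (auto simp: complex_eq_iff x_def y_def algebra_simps power2_eq_square power3_eq_cube)
    then consider "y = 0" | "y^2 = 2*x + 3*x^2" by auto
    then show False
    proof cases
      case 1
      then show False using r x3 x2 by simp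
    next
      case 2
      then have "x*y^2 = 2*x^2 + 3*x^3" by (simp add: algebra_simps power2_eq_square power3_eq_cube)
      then show False using r x3 x2 x0 2 by linarith
    qed
  next
    case 3
    then have "2 * w^3 = 1" using eq by simp
    then have "2 * cmod w ^ 3 = 1" by (metis norm_mult norm_power norm_numeral norm_one)
    moreover have "cmod w ^ 3 > 1" using cm by (simp add: one_less_power)
    ultimately show False by linarith
  next
    case 4
    define q where "q = y^2"
    then have q0: "q \<ge> 0" by simp
    have "w^4 + w^3 = 1" using eq 4 by simp
    then have r: "x^4 - 6*(x^2*q) + q^2 + x^3 - 3*(x*q) = 1"
      and i: "y * (4*x^3 - 4*(x*q) + 3*x^2 - q) = 0"
      using cu qu by (auto simp: complex_eq_iff x_def y_def q_def algebra_simps power2_eq_square power3_eq_cube numeral_eq_Suc)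
    then consider "y = 0" | "4*x^3 - 4*(x*q) + 3*x^2 - q = 0" by auto
    then show False
    proof cases
      case 1
      then have "q = 0" using q_def by simp
      then show False using r x3 x4 by simp
    next
      case 2
      then have e: "q * (4*x + 1) = x^2 * (4*x + 3)" by (simp add: algebra_simps power2_eq_square power3_eq_cube)
      have "x^2 * (4*x+1) < x^2 * (4*x+3)" using x2 by (intro mult_strict_left_mono) auto
      then have "x^2 * (4*x+1) < q * (4*x+1)" using e by simp
      then have lo: "x^2 < q" using x0 by (simp add: mult_less_cancel_right)
      have "0 < x^2*(16*x+2)" using x0 by simp
      moreover have "(5*x^2) * (4*x+1) - x^2 * (4*x+3) = x^2*(16*x+2)" by algebra
      ultimately have "x^2 * (4*x+3) < (5*x^2) * (4*x+1)" by linarith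
      then have "q * (4*x+1) < (5*x^2) * (4*x+1)" using e by simp
      then have hi: "q < 5*x^2" using x0 by (simp add: mult_less_cancel_right)
      have "(q - x^2) * (q - 5*x^2) < 0" using lo hi by (simp add: mult_pos_neg)
      then have a: "q^2 - 6*(x^2*q) + 5*x^4 < 0" by (simp add: algebra_simps power2_eq_square numeral_eq_Suc)
      have "x * x^2 < x * q" using lo x0 by simp
      then have b: "x^3 < x*q" by (simp add: power2_eq_square power3_eq_cube)
      show False using r a b x4 x3 by linarith
    qed
  next
    case 5
    define s where "s = x^2 + y^2"
    have s1: "s > 1" using x2 unfolding s_def
      by (metis add_less_le_mono add.right_neutral zero_le_power2)
    have "w^n = 1 - w^3" using eq by (simp add: algebra_simps)
    then have h: "cmod w ^ n = cmod (1 - w^3)" by (metis norm_power)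
    have "(cmod w ^ 2) ^ n = (cmod w ^ n)^2"
      by (metis power_mult mult.commute)
    also have "\<dots> = (cmod (1 - w^3))^2" using h by simp
    also have "cmod w ^ 2 = s" by (simp add: cmod_power2 s_def x_def y_def)
    also have "(cmod (1 - w^3))^2 = (1 - (x^3 - 3*x*y^2))^2 + (3*x^2*y - y^3)^2"
      using cu by (simp add: cmod_power2 power2_commute)
    also have "\<dots> = s^3 - 2*(x^3 - 3*x*y^2) + 1" unfolding s_def by algebra
    finally have e: "s^n = s^3 - 2*(x^3 - 3*x*y^2) + 1" .
    have y2: "y^2 = s - x^2" using s_def by simp
    have "x*y^2 = x*s - x^3" unfolding y2 by (simp add: algebra_simps power2_eq_square power3_eq_cube)
    then have e2: "s^n = s^3 - 8*x^3 + 6*(x*s) + 1" using e by (simp add: algebra_simps)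
    have s5: "s^5 \<le> s^n" using 5 s1 by (simp add: power_increasing)
    show False
    proof (cases "s < 4")
      case True
      have "0 \<le> 8*x^2+8*x+8-6*s" using x1 x2 True by linarith
      then have "0 \<le> (x-1)*(8*x^2+8*x+8-6*s)" using x1 by simp
      then have k: "8*x^3 - 6*(x*s) \<ge> 8 - 6*s"
        by (simp add: algebra_simps power2_eq_square power3_eq_cube)
      define t where "t = s - 1"
      have t0: "t > 0" using s1 t_def by simp
      have a: "s^3 \<ge> 1 + 3*t" using Bernoulli_inequality[of t 3] t0 t_def by simp
      have "0 \<le> (s-1)^2" by simp
      then have b: "s^2 - 1 \<ge> 2*t" unfolding t_def by (simp add: algebra_simps power2_eq_square)
      have "s^3 * (s^2 - 1) \<ge> (1 + 3*t) * (2*t)" using a b t0 s1 by (intro mult_mono) auto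
      moreover have "s^3 * (s^2 - 1) = s^5 - s^3" by (simp add: algebra_simps flip: power_add)
      moreover have "(1 + 3*t) * (2*t) = 2*t + 6*t^2" by (simp add: algebra_simps power2_eq_square)
      moreover have "(t - 1/3)^2 \<ge> 0" by simp
      moreover have "(t - 1/3)^2 = t^2 - 2/3*t + 1/9" by (simp add: algebra_simps power2_eq_square)
      ultimately have "s^5 - s^3 - 6*s + 7 > 0" using t_def by linarith
      then show False using e2 s5 k by linarith
    next
      case False
      have "x \<le> x^2" using x1 by (simp add: power2_eq_square)
      moreover have "0 \<le> y^2" by simp
      ultimately have xs: "x \<le> s" using s_def by linarith
      have "x*s \<le> s*s" using xs s1 by (intro mult_right_mono) auto
      then have xss: "x*s \<le> s^2" by (simp add: power2_eq_square)
      have s4: "4 \<le> s" using False by simp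
      have "4*4 \<le> s*s" using s4 by (intro mult_mono) auto
      then have s16: "16 \<le> s^2" by (simp add: power2_eq_square)
      have "16*s^3 \<le> s^2*s^3" using s16 s1 by (intro mult_right_mono) auto
      then have a: "16*s^3 \<le> s^5" by (simp flip: power_add)
      have "4*s^2 \<le> s*s^2" using s4 by (intro mult_right_mono) auto
      then have b: "4*s^2 \<le> s^3" by (simp add: power2_eq_square power3_eq_cube)
      have c: "x^3 > 0" using x0 by simp
      show False using e2 s5 xss a b c s16 by linarith
    qed
  qed
qed

lemma poly_indep_poly:
  assumes fin: "finite V"
  shows "poly (indep_poly V E) z = (\<Sum>S\<in>{S. independent_set V E S}. z ^ card S)"
proof -
  define I where "I = {S. independent_set V E S}"
  have IV: "I \<subseteq> Pow V" unfolding I_def independent_set_def by auto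
  have finI: "finite I" using IV fin by (meson finite_Pow_iff finite_subset)
  define N where "N = indep_number V E"
  have cardI: "card S \<le> N" if "S \<in> I" for S
  proof -
    have eq: "{card S |S. independent_set V E S} = card ` I" unfolding I_def by auto
    show ?thesis unfolding N_def indep_number_def eq
      using finI that by (intro Max_ge) auto
  qed
  have "poly (indep_poly V E) z = (\<Sum>k\<le>N. of_nat (indep_count V E k) * z ^ k)"
    unfolding indep_poly_def N_def by (simp add: poly_sum poly_monom)
  also have "\<dots> = (\<Sum>k\<le>N. (\<Sum>S\<in>{S \<in> I. card S = k}. z ^ card S))"
  proof (rule sum.cong)
    fix k assume "k \<in> {..N}"
    have "(\<Sum>S\<in>{S \<in> I. card S = k}. z ^ card S) = (\<Sum>S\<in>{S \<in> I. card S = k}. z ^ k)"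
      by (rule sum.cong) auto
    also have "\<dots> = of_nat (card {S \<in> I. card S = k}) * z ^ k" by simp
    finally have s1: "(\<Sum>S\<in>{S \<in> I. card S = k}. z ^ card S) = of_nat (card {S \<in> I. card S = k}) * z ^ k" .
    have c: "card {S \<in> I. card S = k} = indep_count V E k"
      unfolding indep_count_def I_def by (rule arg_cong[where f=card]) auto
    show "of_nat (indep_count V E k) * z ^ k = (\<Sum>S\<in>{S \<in> I. card S = k}. z ^ card S)"
      by (simp only: s1 c)
  qed simp
  also have "\<dots> = (\<Sum>S\<in>I. z ^ card S)"
    using sum.group[OF finI finite_atMost[of N], where g=card and h="\<lambda>S. z ^ card S"] cardI by auto
  finally show ?thesis unfolding I_def .
qed

lemma sum_Pow_card:
  fixes z :: complex
  assumes "finite A"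
  shows "(\<Sum>S\<in>Pow A. z ^ card S) = (1 + z) ^ card A"
  using assms
proof (induction A rule: finite_induct)
  case empty
  then show ?case by simp
next
  case (insert a A)
  have disj: "Pow A \<inter> insert a ` Pow A = {}" using insert.hyps by auto
  have inj: "inj_on (insert a) (Pow A)"
  proof (rule inj_onI)
    fix X Y assume X: "X \<in> Pow A" and Y: "Y \<in> Pow A" and e: "insert a X = insert a Y"
    have "a \<notin> X" "a \<notin> Y" using X Y insert.hyps by auto
    then show "X = Y" using e by (metis Diff_insert_absorb)
  qed
  have "(\<Sum>S\<in>Pow (insert a A). z ^ card S)
      = (\<Sum>S\<in>Pow A. z ^ card S) + (\<Sum>S\<in>insert a ` Pow A. z ^ card S)"
    unfolding Pow_insert using disj insert.hyps by (intro sum.union_disjoint) auto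
  also have "(\<Sum>S\<in>insert a ` Pow A. z ^ card S) = (\<Sum>S\<in>Pow A. z ^ card (insert a S))"
    using inj by (simp add: sum.reindex)
  also have "\<dots> = (\<Sum>S\<in>Pow A. z * z ^ card S)"
  proof (rule sum.cong)
    fix S assume "S \<in> Pow A"
    then have "finite S" "a \<notin> S" using insert.hyps finite_subset by auto
    then show "z ^ card (insert a S) = z * z ^ card S" by simp
  qed simp
  also have "\<dots> = z * (\<Sum>S\<in>Pow A. z ^ card S)" by (simp add: sum_distrib_left)
  also have "\<dots> = z * (1 + z) ^ card A" using insert.IH by simp
  finally show ?case using insert.IH insert.hyps by (simp add: algebra_simps)
qed

lemma Kbip_E_LL: "Kbip_E m n x y \<Longrightarrow> x \<in> Inl ` A \<Longrightarrow> y \<in> Inl ` B \<Longrightarrow> False"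
  unfolding Kbip_E_def by blast

lemma Kbip_E_RR: "Kbip_E m n x y \<Longrightarrow> x \<in> Inr ` A \<Longrightarrow> y \<in> Inr ` B \<Longrightarrow> False"
  unfolding Kbip_E_def by blast

lemma Kbip_indep:
  "{S. independent_set (Kbip_V m n) (Kbip_E m n) S} = Pow (Inl ` {..<m}) \<union> Pow (Inr ` {..<n})"
  (is "?A = Pow ?L \<union> Pow ?R")
proof (intro set_eqI iffI)
  fix S assume "S \<in> ?A"
  then have sub: "S \<subseteq> ?L \<union> ?R"
    and ne: "\<And>x y. x \<in> S \<Longrightarrow> y \<in> S \<Longrightarrow> \<not> Kbip_E m n x y"
    unfolding independent_set_def Kbip_V_def by simp_all
  have "S \<subseteq> ?L \<or> S \<subseteq> ?R"
  proof (rule ccontr)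
    assume "\<not> (S \<subseteq> ?L \<or> S \<subseteq> ?R)"
    then obtain a b where a: "a \<in> S" "a \<notin> ?L" and b: "b \<in> S" "b \<notin> ?R"
      unfolding subset_iff by blast
    from a sub have "a \<in> ?R" by blast
    then obtain j where j: "a = Inr j" "j < n" by blast
    from b sub have "b \<in> ?L" by blast
    then obtain i where i: "b = Inl i" "i < m" by blast
    have "Kbip_E m n b a" unfolding Kbip_E_def using i j by blast
    moreover have "\<not> Kbip_E m n b a" using ne a b by simp
    ultimately show False by simp
  qed
  then show "S \<in> Pow ?L \<union> Pow ?R" by simp
next
  fix S assume S: "S \<in> Pow ?L \<union> Pow ?R"
  then have "S \<subseteq> Kbip_V m n" unfolding Kbip_V_def by blast
  moreover have "\<not> Kbip_E m n x y" if "x \<in> S" "y \<in> S" for x y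
  proof
    assume e: "Kbip_E m n x y"
    show False
    proof (cases "S \<subseteq> ?L")
      case True
      then show False using Kbip_E_LL[OF e] that by blast
    next
      case False
      then have "S \<subseteq> ?R" using S by simp
      then show False using Kbip_E_RR[OF e] that by blast
    qed
  qed
  ultimately show "S \<in> ?A"
    unfolding independent_set_def by simp
qed

lemma poly_Kbip:
  "poly (indep_poly (Kbip_V m n) (Kbip_E m n)) z = (1 + z) ^ m + (1 + z) ^ n - 1"
proof -
  let ?L = "Inl ` {..<m} :: (nat + nat) set" and ?R = "Inr ` {..<n} :: (nat + nat) set"
  have fin: "finite (Kbip_V m n)" unfolding Kbip_V_def by simp
  have int: "Pow ?L \<inter> Pow ?R = {{}}" by auto
  have "poly (indep_poly (Kbip_V m n) (Kbip_E m n)) z = (\<Sum>S\<in>Pow ?L \<union> Pow ?R. z ^ card S)"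
    using poly_indep_poly[OF fin] Kbip_indep by simp
  also have "\<dots> = (\<Sum>S\<in>Pow ?L. z ^ card S) + (\<Sum>S\<in>Pow ?R. z ^ card S) - (\<Sum>S\<in>Pow ?L \<inter> Pow ?R. z ^ card S)"
    using sum.union_inter[of "Pow ?L" "Pow ?R" "\<lambda>S. z ^ card S"] by (simp add: algebra_simps)
  also have "\<dots> = (1 + z) ^ m + (1 + z) ^ n - 1"
    using int by (simp add: sum_Pow_card card_image)
  finally show ?thesis .
qed

theorem theorem2:
  fixes n :: nat
  assumes "n \<ge> 1"
  shows "stable_graph (Kbip_V 2 n) (Kbip_E 2 n) \<and> stable_graph (Kbip_V 3 n) (Kbip_E 3 n)"
proof -
  have key: "Re z \<le> 0" if h: "(1 + z) ^ m + (1 + z) ^ n - 1 = 0" and m: "m = 2 \<or> m = 3"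
    for z :: complex and m :: nat
  proof (rule ccontr)
    assume "\<not> Re z \<le> 0"
    then have r: "Re (1 + z) > 1" by simp
    have e: "(1 + z) ^ n + (1 + z) ^ m = 1" using h by (simp add: algebra_simps)
    from m show False
    proof
      assume "m = 2"
      then show False using m2_case[OF r assms] e by simp
    next
      assume "m = 3"
      then show False using m3_case[OF r assms] e by simp
    qed
  qed
  show ?thesis unfolding stable_graph_def poly_Kbip
    using key[of _ 2] key[of _ 3] by blast
qed

end
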